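(* Let $S\subseteq\mathcal S_d$ be nonempty, $[d]$ partitioned into groups $G_1,\dots,G_g$, $\bar\alpha,\bar\beta\in[0,1]^g$, $k\in[d]$, and $\alpha\ge 1$. Let $\mathcal{F}\subseteq\mathcal S_d$ be the (nonempty) set of $(\bar\alpha,\bar\beta)$-$k$-fair rankings. If $\tilde\pi\in\mathcal F$ satisfies $\sum_{\pi\in S}F(\pi,\tilde\pi)\le\alpha\min_{\sigma\in\mathcal F}\sum_{\pi\in S}F(\pi,\sigma)$, then $\sum_{\pi\in S}\kappa(\pi,\tilde\pi)\le 2\alpha\min_{\sigma\in\mathcal F}\sum_{\pi\in S}\kappa(\pi,\sigma)$.
   Context: $\mathcal{S}_d$ is the set of rankings of $[d]$, $\pi(a)$ the rank of $a$. A ranking is $(\bar\alpha,\bar\beta)$-$k$-fair if for every $i\in[g]$ its top $k$ positions contain at least $\lfloor\alpha_i k\rfloor$ and at most $\lceil\beta_i k\rceil$ members of $G_i$. $F(\pi,\sigma)=\sum_{i\in[d]}|\pi(i)-\sigma(i)|$ is the Spearman footrule distance; $\kappa(\pi,\sigma)$ is the Kendall-tau distance, the number of unordered pairs $\{a,b\}\subseteq[d]$ ordered differently by $\pi$ and $\sigma$. *)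

theory Defs
  imports Complex_Main "HOL-Combinatorics.Permutations"
begin

text \<open>A ranking of [d] = {1..d} is a permutation p of {1..d}; p a is the rank of item a.\<close>
definition rankings :: "nat \<Rightarrow> (nat \<Rightarrow> nat) set" where
  "rankings d = {p. p permutes {1..d}}"

definition k_fair :: "nat \<Rightarrow> (nat \<Rightarrow> nat set) \<Rightarrow> (nat \<Rightarrow> real) \<Rightarrow> (nat \<Rightarrow> real)
    \<Rightarrow> nat \<Rightarrow> (nat \<Rightarrow> nat) \<Rightarrow> bool" where
  "k_fair g G al be k p \<longleftrightarrow>
     (\<forall>i\<in>{1..g}.
        \<lfloor>al i * real k\<rfloor> \<le> int (card {a \<in> G i. p a \<le> k}) \<and>
        int (card {a \<in> G i. p a \<le> k}) \<le> \<lceil>be i * real k\<rceil>)"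

definition fair_rankings :: "nat \<Rightarrow> nat \<Rightarrow> (nat \<Rightarrow> nat set) \<Rightarrow> (nat \<Rightarrow> real) \<Rightarrow> (nat \<Rightarrow> real)
    \<Rightarrow> nat \<Rightarrow> (nat \<Rightarrow> nat) set" where
  "fair_rankings d g G al be k = {p \<in> rankings d. k_fair g G al be k p}"

definition footrule :: "nat \<Rightarrow> (nat \<Rightarrow> nat) \<Rightarrow> (nat \<Rightarrow> nat) \<Rightarrow> nat" where
  "footrule d p sigma = (\<Sum>i\<in>{1..d}. nat \<bar>int (p i) - int (sigma i)\<bar>)"

definition kendall :: "nat \<Rightarrow> (nat \<Rightarrow> nat) \<Rightarrow> (nat \<Rightarrow> nat) \<Rightarrow> nat" where
  "kendall d p sigma = card {(a, b). a \<in> {1..d} \<and> b \<in> {1..d} \<and> a < b \<and>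
                                      (p a < p b) \<noteq> (sigma a < sigma b)}"

end

theory Submission
  imports Defs
begin

definition Dset :: "nat \<Rightarrow> (nat \<Rightarrow> nat) \<Rightarrow> (nat \<Rightarrow> nat) \<Rightarrow> (nat \<times> nat) set" where
  "Dset d p s = {(x,y). x \<in> {1..d} \<and> y \<in> {1..d} \<and> p x < p y \<and> s y < s x}"

lemma finite_Dset: "finite (Dset d p s)"
  by (rule finite_subset[of _ "{1..d} \<times> {1..d}"]) (auto simp: Dset_def)

lemma kendall_Dset:
  assumes p: "p permutes {1..d}" and s: "s permutes {1..d}"
  shows "kendall d p s = card (Dset d p s)"
proof -
  let ?K = "{(a, b). a \<in> {1..d} \<and> b \<in> {1..d} \<and> a < b \<and> (p a < p b) \<noteq> (s a < s b)}"
  have ip: "inj p" and iss: "inj s" using p s permutes_inj by auto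
  have fK: "finite ?K"
    by (rule finite_subset[of _ "{1..d} \<times> {1..d}"]) auto
  let ?f = "\<lambda>(a,b). if p a < p b then (a,b) else (b,a)"
  have "inj_on ?f ?K"
    by (auto simp: inj_on_def split: if_splits)
  moreover have "?f ` ?K \<subseteq> Dset d p s"
  proof
    fix z assume "z \<in> ?f ` ?K"
    then obtain w where w: "w \<in> ?K" "z = ?f w" by blast
    obtain a b where "w = (a,b)" by (cases w)
    with w have ab: "(a,b) \<in> ?K" "z = ?f (a,b)" by auto
    have "p a \<noteq> p b" "s a \<noteq> s b" using ab ip iss by (auto dest: injD)
    then show "z \<in> Dset d p s" using ab by (auto simp: Dset_def split: if_splits)
  qed
  ultimately have le1: "card ?K \<le> card (Dset d p s)"
    using card_inj_on_le finite_Dset by blast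
  let ?g = "\<lambda>(x,y). (min x y, max x y)"
  have "inj_on ?g (Dset d p s)"
    by (auto simp: inj_on_def Dset_def min_def max_def split: if_splits)
  moreover have "?g ` Dset d p s \<subseteq> ?K"
  proof
    fix z assume "z \<in> ?g ` Dset d p s"
    then obtain w where w: "w \<in> Dset d p s" "z = ?g w" by blast
    obtain x y where "w = (x,y)" by (cases w)
    with w have xy: "(x,y) \<in> Dset d p s" "z = ?g (x,y)" by auto
    have "x \<noteq> y" using xy by (auto simp: Dset_def)
    then show "z \<in> ?K" using xy by (auto simp: Dset_def min_def max_def)
  qed
  ultimately have "card (Dset d p s) \<le> card ?K"
    using card_inj_on_le fK by blast
  with le1 show ?thesis unfolding kendall_def by simp
qed

lemma card_less:
  assumes s: "s permutes {1..d}" and a: "a \<in> {1..d}"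
  shows "card {b \<in> {1..d}. s b < s a} = s a - 1"
proof -
  have iss: "inj s" using s permutes_inj by auto
  have sa: "s a \<in> {1..d}" using a by (simp only: permutes_in_image[OF s])
  have "s ` {b \<in> {1..d}. s b < s a} = {1..<s a}"
  proof
    show "s ` {b \<in> {1..d}. s b < s a} \<subseteq> {1..<s a}"
    proof
      fix v assume "v \<in> s ` {b \<in> {1..d}. s b < s a}"
      then obtain b where b: "b \<in> {1..d}" "s b < s a" "v = s b" by blast
      then have "s b \<in> {1..d}" by (simp only: permutes_in_image[OF s])
      then show "v \<in> {1..<s a}" using b by simp
    qed
  next
    show "{1..<s a} \<subseteq> s ` {b \<in> {1..d}. s b < s a}"
    proof
      fix v assume v: "v \<in> {1..<s a}"
      then have "v \<in> {1..d}" using sa by auto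
      then have "v \<in> s ` {1..d}" using permutes_image[OF s] by simp
      then obtain b where b: "b \<in> {1..d}" "v = s b" by (rule imageE)
      then have "b \<in> {b \<in> {1..d}. s b < s a}" using v by simp
      then show "v \<in> s ` {b \<in> {1..d}. s b < s a}" using b(2) by (rule rev_image_eqI)
    qed
  qed
  then have "card (s ` {b \<in> {1..d}. s b < s a}) = s a - 1" by simp
  moreover have "inj_on s {b \<in> {1..d}. s b < s a}" by (rule inj_on_subset[OF iss]) simp
  ultimately show ?thesis by (simp add: card_image)
qed

lemma kendall_le_footrule:
  assumes p: "p permutes {1..d}" and s: "s permutes {1..d}"
  shows "kendall d p s \<le> footrule d p s"
proof -
  have ip: "inj p" and iss: "inj s" using p s permutes_inj by auto
  define A where "A x = {y \<in> {1..d}. p x < s y \<and> s y < s x}" for x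
  define B where "B y = {x \<in> {1..d}. s y \<le> p x \<and> p x < p y}" for y
  have fA: "finite (A x)" for x by (simp add: A_def)
  have fB: "finite (B x)" for x by (simp add: B_def)
  have cA: "card (A c) \<le> s c - p c - 1" for c
  proof -
    have "card (A c) \<le> card {p c<..<s c}"
      by (rule card_inj_on_le[where f=s]) (auto simp: A_def intro: inj_on_subset[OF iss])
    then show ?thesis by simp
  qed
  have cB: "card (B c) \<le> p c - s c" for c
  proof -
    have "card (B c) \<le> card {s c..<p c}"
      by (rule card_inj_on_le[where f=p]) (auto simp: B_def intro: inj_on_subset[OF ip])
    then show ?thesis by simp
  qed
  have sub: "Dset d p s \<subseteq> (SIGMA x:{1..d}. A x) \<union> (\<lambda>(y,x). (x,y)) ` (SIGMA y:{1..d}. B y)"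
  proof
    fix z assume z: "z \<in> Dset d p s"
    then obtain x y where xy: "z = (x,y)" "x \<in> {1..d}" "y \<in> {1..d}" "p x < p y" "s y < s x"
      by (auto simp: Dset_def)
    show "z \<in> (SIGMA x:{1..d}. A x) \<union> (\<lambda>(y,x). (x,y)) ` (SIGMA y:{1..d}. B y)"
    proof (cases "p x < s y")
      case True
      then show ?thesis using xy by (auto simp: A_def)
    next
      case False
      then have "(y,x) \<in> (SIGMA y:{1..d}. B y)" using xy by (auto simp: B_def)
      then show ?thesis using xy by force
    qed
  qed
  have "card (Dset d p s) \<le> card ((SIGMA x:{1..d}. A x) \<union> (\<lambda>(y,x). (x,y)) ` (SIGMA y:{1..d}. B y))"
    by (rule card_mono[OF _ sub]) (auto intro: finite_SigmaI fA fB)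
  also have "\<dots> \<le> card (SIGMA x:{1..d}. A x) + card ((\<lambda>(y,x). (x,y)) ` (SIGMA y:{1..d}. B y))"
    by (rule card_Un_le)
  also have "\<dots> \<le> card (SIGMA x:{1..d}. A x) + card (SIGMA y:{1..d}. B y)"
    using card_image_le[OF finite_SigmaI[OF _ fB], of "{1..d}" "\<lambda>(y,x). (x,y)"] by simp
  also have "\<dots> = (\<Sum>c\<in>{1..d}. card (A c) + card (B c))"
    by (simp add: card_SigmaI fA fB sum.distrib)
  also have "\<dots> \<le> (\<Sum>c\<in>{1..d}. nat \<bar>int (p c) - int (s c)\<bar>)"
  proof (rule sum_mono)
    fix c
    show "card (A c) + card (B c) \<le> nat \<bar>int (p c) - int (s c)\<bar>"
      using cA[of c] cB[of c] by linarith
  qed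
  finally show ?thesis using kendall_Dset[OF p s] unfolding footrule_def by simp
qed

lemma footrule_le_kendall:
  assumes p: "p permutes {1..d}" and s: "s permutes {1..d}"
  shows "footrule d p s \<le> 2 * kendall d p s"
proof -
  have ip: "inj p" and iss: "inj s" using p s permutes_inj by auto
  define Out where "Out a = {b \<in> {1..d}. p a < p b \<and> s b < s a}" for a
  define In where "In a = {b \<in> {1..d}. p b < p a \<and> s a < s b}" for a
  have fO: "finite (Out a)" for a by (simp add: Out_def)
  have fI: "finite (In a)" for a by (simp add: In_def)
  have pos: "1 \<le> p a" "1 \<le> s a" if "a \<in> {1..d}" for a
  proof -
    have "p a \<in> {1..d}" "s a \<in> {1..d}" using that
      by (simp_all only: permutes_in_image[OF p] permutes_in_image[OF s])
    then show "1 \<le> p a" "1 \<le> s a" by simp_all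
  qed
  have key: "nat \<bar>int (p a) - int (s a)\<bar> \<le> card (Out a) + card (In a)" if a: "a \<in> {1..d}" for a
  proof (cases "p a < s a")
    case True
    have "card {b \<in> {1..d}. s b < s a} - card {b \<in> {1..d}. p b < p a}
       \<le> card ({b \<in> {1..d}. s b < s a} - {b \<in> {1..d}. p b < p a})"
      by (rule diff_card_le_card_Diff) simp
    also have "\<dots> \<le> card (Out a)"
    proof (rule card_mono[OF fO], rule subsetI)
      fix b assume b: "b \<in> {b \<in> {1..d}. s b < s a} - {b \<in> {1..d}. p b < p a}"
      then have "b \<noteq> a" by auto
      then have "p b \<noteq> p a" using ip by (auto dest: injD)
      with b show "b \<in> Out a" by (auto simp: Out_def)
    qed
    finally show ?thesis using card_less[OF s a] card_less[OF p a] pos[OF a] True by linarith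
  next
    case False
    have "card {b \<in> {1..d}. p b < p a} - card {b \<in> {1..d}. s b < s a}
       \<le> card ({b \<in> {1..d}. p b < p a} - {b \<in> {1..d}. s b < s a})"
      by (rule diff_card_le_card_Diff) simp
    also have "\<dots> \<le> card (In a)"
    proof (rule card_mono[OF fI], rule subsetI)
      fix b assume b: "b \<in> {b \<in> {1..d}. p b < p a} - {b \<in> {1..d}. s b < s a}"
      then have "b \<noteq> a" by auto
      then have "s b \<noteq> s a" using iss by (auto dest: injD)
      with b show "b \<in> In a" by (auto simp: In_def)
    qed
    finally show ?thesis using card_less[OF s a] card_less[OF p a] pos[OF a] False by linarith
  qed
  have e1: "Dset d p s = (SIGMA a:{1..d}. Out a)" by (auto simp: Dset_def Out_def)
  have e2: "(\<lambda>(x,y). (y,x)) ` Dset d p s = (SIGMA a:{1..d}. In a)" by (auto simp: Dset_def In_def)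
  have "inj_on (\<lambda>(x,y). (y,x)) (Dset d p s)" by (auto simp: inj_on_def)
  then have "card (SIGMA a:{1..d}. In a) = card (Dset d p s)" using e2 card_image by metis
  then have sI: "(\<Sum>a\<in>{1..d}. card (In a)) = card (Dset d p s)" by (simp add: card_SigmaI fI)
  have sO: "(\<Sum>a\<in>{1..d}. card (Out a)) = card (Dset d p s)" using e1 by (simp add: card_SigmaI fO)
  have "footrule d p s \<le> (\<Sum>a\<in>{1..d}. card (Out a) + card (In a))"
    unfolding footrule_def by (rule sum_mono) (rule key)
  also have "\<dots> = 2 * card (Dset d p s)" using sI sO by (simp add: sum.distrib)
  finally show ?thesis using kendall_Dset[OF p s] by simp
qed

theorem theoremA2:
  fixes d g k :: nat and G :: "nat \<Rightarrow> nat set" and al be :: "nat \<Rightarrow> real"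
    and alpha :: real and S :: "(nat \<Rightarrow> nat) set" and pit :: "nat \<Rightarrow> nat"
  assumes S: "S \<subseteq> rankings d" "S \<noteq> {}"
    and G_nonempty: "\<forall>i\<in>{1..g}. G i \<noteq> {}"
    and G_disjoint: "\<forall>i\<in>{1..g}. \<forall>j\<in>{1..g}. i \<noteq> j \<longrightarrow> G i \<inter> G j = {}"
    and G_cover: "(\<Union>i\<in>{1..g}. G i) = {1..d}"
    and al_range: "\<forall>i\<in>{1..g}. 0 \<le> al i \<and> al i \<le> 1"
    and be_range: "\<forall>i\<in>{1..g}. 0 \<le> be i \<and> be i \<le> 1"
    and k: "k \<in> {1..d}"
    and alpha: "alpha \<ge> 1"
    and F_nonempty: "fair_rankings d g G al be k \<noteq> {}"
    and pit: "pit \<in> fair_rankings d g G al be k"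
    and approx: "real (\<Sum>p\<in>S. footrule d p pit) \<le>
        alpha * real (Min ((\<lambda>sigma. \<Sum>p\<in>S. footrule d p sigma) ` fair_rankings d g G al be k))"
  shows "real (\<Sum>p\<in>S. kendall d p pit) \<le>
        2 * alpha * real (Min ((\<lambda>sigma. \<Sum>p\<in>S. kendall d p sigma) ` fair_rankings d g G al be k))"
proof -
  let ?Fr = "fair_rankings d g G al be k"
  have finR: "finite (rankings d)"
    unfolding rankings_def using finite_permutations[of "{1..d}"] by simp
  have finFr: "finite ?Fr" by (rule finite_subset[OF _ finR]) (auto simp: fair_rankings_def)
  have finS: "finite S" using S(1) finR finite_subset by blast
  have perm: "q permutes {1..d}" if "q \<in> rankings d" for q using that by (simp add: rankings_def)
  have permFr: "q permutes {1..d}" if "q \<in> ?Fr" for q using that by (simp add: fair_rankings_def rankings_def)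
  define fK where "fK = (\<lambda>sigma. \<Sum>p\<in>S. kendall d p sigma)"
  define fF where "fF = (\<lambda>sigma. \<Sum>p\<in>S. footrule d p sigma)"
  have "Min (fK ` ?Fr) \<in> fK ` ?Fr" using finFr F_nonempty by (intro Min_in) auto
  then obtain sst where sst: "sst \<in> ?Fr" "fK sst = Min (fK ` ?Fr)" by auto
  have a1: "fK pit \<le> fF pit"
    unfolding fK_def fF_def
    by (rule sum_mono) (rule kendall_le_footrule[OF perm permFr[OF pit]], use S(1) in auto)
  have a2: "fF sst \<le> 2 * fK sst"
    unfolding fK_def fF_def sum_distrib_left
    by (rule sum_mono) (rule footrule_le_kendall[OF perm permFr[OF sst(1)]], use S(1) in auto)
  have a3: "Min (fF ` ?Fr) \<le> fF sst" using finFr sst(1) by (intro Min_le) auto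
  have "real (fK pit) \<le> real (fF pit)" using a1 by simp
  also have "\<dots> \<le> alpha * real (Min (fF ` ?Fr))" using approx unfolding fF_def by simp
  also have "\<dots> \<le> alpha * real (fF sst)" using a3 alpha by (intro mult_left_mono) auto
  also have "\<dots> \<le> alpha * (2 * real (fK sst))" using a2 alpha by (intro mult_left_mono) auto
  also have "\<dots> = 2 * alpha * real (Min (fK ` ?Fr))" using sst(2) by simp
  finally show ?thesis unfolding fK_def by simp
qed

end
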